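(* For the dilution model with $N$ items and $K$ defectives, random Bernoulli$(1/K)$ design and maximum-likelihood decoding, in the regime $N,K\to\infty$ with $K=o(N)$, a number of tests $T=O\!\left(\frac{K\log N}{(1-u)^2}\right)$ is achievable (arbitrarily small average error probability), where $u\in[0,1)$ is the crossover probability of the Z-channel (the probability that $1$ is flipped into $0$).
   Context: Design: $N\times T$ binary matrix with i.i.d. Bernoulli$(1/K)$ entries, $X_j(t)=1$ iff item $j$ is in test $t$. Dilution model: for defective set $S$ ($|S|=K$), $Y(t)=\bigvee_{j\in S}\mathcal Z_{j,t}(X_j(t))$, where each $\mathcal Z_{j,t}$ is an independent use of a Z-channel mapping input $0$ to $0$ with probability $1$ and input $1$ to $0$ with probability $u$ and to $1$ with probability $1-u$. The ML decoder chooses a $K$-subset $S'$ maximizing $p(Y^T\mid\mathbf X_{S'})$; average error probability is averaged over the design, the channel, and $S$ uniform among $K$-subsets. *)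

theory Defs
  imports Complex_Main
begin

text \<open>Items are 0..<N, tests are 0..<T. A design is a boolean matrix X,
  X j t = True iff item j is in test t; outcomes Y t. Entries outside the
  ranges are forced to False so that the sets below are finite.\<close>

definition designs :: "nat \<Rightarrow> nat \<Rightarrow> (nat \<Rightarrow> nat \<Rightarrow> bool) set" where
  "designs N T = {X. \<forall>j t. X j t \<longrightarrow> j < N \<and> t < T}"

definition outcomes :: "nat \<Rightarrow> (nat \<Rightarrow> bool) set" where
  "outcomes T = {Y. \<forall>t. Y t \<longrightarrow> t < T}"

definition defective_sets :: "nat \<Rightarrow> nat \<Rightarrow> nat set set" where
  "defective_sets N K = {S. S \<subseteq> {..<N} \<and> card S = K}"

definition design_prob :: "nat \<Rightarrow> nat \<Rightarrow> nat \<Rightarrow> (nat \<Rightarrow> nat \<Rightarrow> bool) \<Rightarrow> real" where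
  "design_prob N K T X =
     (\<Prod>j<N. \<Prod>t<T. if X j t then 1 / real K else 1 - 1 / real K)"

text \<open>Dilution-model likelihood p(Y^T | X_S): each test t is the OR of independent
  Z-channel outputs; a positive entry is erased (1 to 0) with probability u, so
  Y t = 0 with probability u ^ (number of items of S in test t).\<close>
definition dilution_lik ::
  "real \<Rightarrow> nat \<Rightarrow> (nat \<Rightarrow> nat \<Rightarrow> bool) \<Rightarrow> nat set \<Rightarrow> (nat \<Rightarrow> bool) \<Rightarrow> real" where
  "dilution_lik u T X S Y =
     (\<Prod>t<T. let m = card {j \<in> S. X j t} in if Y t then 1 - u ^ m else u ^ m)"

text \<open>ML decoding error event (ties counted as errors): some other K-subset
  S' has likelihood at least that of the true defective set S.\<close>
definition ml_error ::
  "nat \<Rightarrow> nat \<Rightarrow> nat \<Rightarrow> real \<Rightarrow> (nat \<Rightarrow> nat \<Rightarrow> bool) \<Rightarrow> nat set \<Rightarrow> (nat \<Rightarrow> bool) \<Rightarrow> bool" where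
  "ml_error N K T u X S Y =
     (\<exists>S' \<in> defective_sets N K. S' \<noteq> S \<and> dilution_lik u T X S' Y \<ge> dilution_lik u T X S Y)"

definition avg_error :: "nat \<Rightarrow> nat \<Rightarrow> nat \<Rightarrow> real \<Rightarrow> real" where
  "avg_error N K T u =
     (\<Sum>S \<in> defective_sets N K. \<Sum>X \<in> designs N T. \<Sum>Y \<in> outcomes T.
        (if ml_error N K T u X S Y
         then design_prob N K T X * dilution_lik u T X S Y else 0))
     / real (N choose K)"

end

theory Submission
  imports Defs
begin


definition fsp :: "'a set \<Rightarrow> 'b set \<Rightarrow> 'b \<Rightarrow> ('a \<Rightarrow> 'b) set" where
  "fsp A V d = {f. (\<forall>x. x \<notin> A \<longrightarrow> f x = d) \<and> (\<forall>x\<in>A. f x \<in> V)}"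

lemma fsp_empty: "fsp {} V d = {\<lambda>_. d}"
  by (auto simp: fsp_def)

lemma fsp_insert:
  assumes "a \<notin> A" "d \<in> V"
  shows "fsp (insert a A) V d = (\<lambda>(v,f). f(a:=v)) ` (V \<times> fsp A V d)"
proof
  show "fsp (insert a A) V d \<subseteq> (\<lambda>(v,f). f(a:=v)) ` (V \<times> fsp A V d)"
  proof
    fix f assume f: "f \<in> fsp (insert a A) V d"
    have "f = (\<lambda>(v,f). f(a:=v)) (f a, f(a:=d))" by auto
    moreover have "(f a, f(a:=d)) \<in> V \<times> fsp A V d" using f assms by (auto simp: fsp_def)
    ultimately show "f \<in> (\<lambda>(v,f). f(a:=v)) ` (V \<times> fsp A V d)" by blast
  qed
  show "(\<lambda>(v,f). f(a:=v)) ` (V \<times> fsp A V d) \<subseteq> fsp (insert a A) V d"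
    by (auto simp: fsp_def)
qed

lemma fsp_inj:
  assumes "a \<notin> A"
  shows "inj_on (\<lambda>(v,f). f(a:=v)) (V \<times> fsp A V d)"
proof (rule inj_onI, clarify)
  fix v f v' f'
  assume h: "v \<in> V" "f \<in> fsp A V d" "v' \<in> V" "f' \<in> fsp A V d" "f(a := v) = f'(a := v')"
  from h(5) have "v = v'" by (metis fun_upd_same)
  moreover have "f = f'"
  proof
    fix x show "f x = f' x"
    proof (cases "x = a")
      case True thus ?thesis using h(2,4) assms by (simp add: fsp_def)
    next
      case False thus ?thesis using h(5) by (metis fun_upd_other)
    qed
  qed
  ultimately show "v = v' \<and> f = f'" by simp
qed

lemma fsp_finite_sum:
  fixes g :: "'a \<Rightarrow> 'b \<Rightarrow> real"
  assumes "finite A" "finite V" "d \<in> V"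
  shows "finite (fsp A V d) \<and> (\<Sum>f\<in>fsp A V d. \<Prod>a\<in>A. g a (f a)) = (\<Prod>a\<in>A. \<Sum>v\<in>V. g a v)"
  using assms(1)
proof (induction A rule: finite_induct)
  case empty thus ?case by (simp add: fsp_empty)
next
  case (insert a A)
  have eq: "fsp (insert a A) V d = (\<lambda>(v,f). f(a:=v)) ` (V \<times> fsp A V d)"
    using fsp_insert[OF insert(2) assms(3)] .
  have inj: "inj_on (\<lambda>(v,f). f(a:=v)) (V \<times> fsp A V d)" using fsp_inj[OF insert(2)] .
  have fin: "finite (fsp (insert a A) V d)" using eq insert.IH assms(2) by simp
  have "(\<Sum>f\<in>fsp (insert a A) V d. \<Prod>b\<in>insert a A. g b (f b))
      = (\<Sum>p\<in>V \<times> fsp A V d. \<Prod>b\<in>insert a A. g b (((\<lambda>(v,f). f(a:=v)) p) b))"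
    by (rule sum.reindex_cong[OF inj eq]) simp
  also have "\<dots> = (\<Sum>p\<in>V \<times> fsp A V d. g a (fst p) * (\<Prod>b\<in>A. g b (snd p b)))"
  proof (rule sum.cong[OF refl])
    fix p assume "p \<in> V \<times> fsp A V d"
    obtain v f where p: "p = (v, f)" by (cases p)
    have "(\<Prod>b\<in>A. g b ((f(a:=v)) b)) = (\<Prod>b\<in>A. g b (f b))"
      by (rule prod.cong) (use insert(2) in auto)
    moreover have "(\<Prod>b\<in>insert a A. g b ((f(a:=v)) b)) = g a ((f(a:=v)) a) * (\<Prod>b\<in>A. g b ((f(a:=v)) b))"
      by (rule prod.insert[OF insert(1,2)])
    ultimately show "(\<Prod>b\<in>insert a A. g b (((\<lambda>(v,f). f(a:=v)) p) b)) = g a (fst p) * (\<Prod>b\<in>A. g b (snd p b))"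
      unfolding p by simp
  qed
  also have "\<dots> = (\<Sum>v\<in>V. \<Sum>f\<in>fsp A V d. g a v * (\<Prod>b\<in>A. g b (f b)))"
    by (subst sum.cartesian_product) (simp add: case_prod_beta)
  also have "\<dots> = (\<Sum>v\<in>V. g a v) * (\<Sum>f\<in>fsp A V d. (\<Prod>b\<in>A. g b (f b)))"
    by (simp add: sum_product)
  also have "\<dots> = (\<Prod>b\<in>insert a A. \<Sum>v\<in>V. g b v)"
    using insert by simp
  finally show ?case using fin by simp
qed

lemma sqrt_prod: "finite A \<Longrightarrow> sqrt (\<Prod>a\<in>A. f a) = (\<Prod>a\<in>A. sqrt (f a))"
  by (induction A rule: finite_induct) (auto simp: real_sqrt_mult)

definition q :: "nat \<Rightarrow> bool \<Rightarrow> real" where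
  "q K v = (if v then 1 / real K else 1 - 1 / real K)"

definition colp :: "nat \<Rightarrow> nat \<Rightarrow> (nat \<Rightarrow> bool) \<Rightarrow> real" where
  "colp N K x = (\<Prod>j<N. q K (x j))"

definition ell :: "real \<Rightarrow> nat set \<Rightarrow> (nat \<Rightarrow> bool) \<Rightarrow> bool \<Rightarrow> real" where
  "ell u S x y = (let m = card {j \<in> S. x j} in if y then 1 - u ^ m else u ^ m)"

definition bet :: "real \<Rightarrow> nat set \<Rightarrow> nat set \<Rightarrow> (nat \<Rightarrow> bool) \<Rightarrow> real" where
  "bet u S S' x = (\<Sum>y\<in>UNIV. sqrt (ell u S x y * ell u S' x y))"

definition rho :: "nat \<Rightarrow> nat \<Rightarrow> real \<Rightarrow> nat set \<Rightarrow> nat set \<Rightarrow> real" where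
  "rho N K u S S' = (\<Sum>x\<in>fsp {..<N} UNIV False. colp N K x * bet u S S' x)"

lemma swap_inj: "inj_on (\<lambda>(G::nat \<Rightarrow> nat \<Rightarrow> bool) j t. G t j) M"
  proof (rule inj_onI)
    fix G H :: "nat \<Rightarrow> nat \<Rightarrow> bool" assume eq: "(\<lambda>j t. G t j) = (\<lambda>j t. H t j)"
    have "G t j = H t j" for t j using fun_cong[OF fun_cong[OF eq, of j], of t] by simp
    thus "G = H" by (intro ext)
  qed

lemma designs_sub1: "designs N T \<subseteq> (\<lambda>G j t. G t j) ` fsp {..<T} (fsp {..<N} UNIV False) (\<lambda>_. False)"
proof
  fix X assume X: "X \<in> designs N T"
  have "(\<lambda>t j. X j t) \<in> fsp {..<T} (fsp {..<N} UNIV False) (\<lambda>_. False)"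
  proof -
    have X': "\<And>j t. X j t \<Longrightarrow> j < N \<and> t < T" using X unfolding designs_def by blast
    have a: "\<forall>t. t \<notin> {..<T} \<longrightarrow> (\<lambda>j. X j t) = (\<lambda>_. False)"
    proof (intro allI impI ext)
      fix t j assume "t \<notin> {..<T}" thus "X j t = False" using X'[of j t] by auto
    qed
    have b: "\<forall>t\<in>{..<T}. (\<lambda>j. X j t) \<in> fsp {..<N} UNIV False"
    proof
      fix t assume "t \<in> {..<T}"
      have "\<forall>y. y \<notin> {..<N} \<longrightarrow> X y t = False"
      proof (intro allI impI)
        fix y assume "y \<notin> {..<N}" thus "X y t = False" using X'[of y t] by auto
      qed
      thus "(\<lambda>j. X j t) \<in> fsp {..<N} UNIV False" unfolding fsp_def by simp
    qed
    show ?thesis unfolding fsp_def[of "{..<T}"] using a b by (intro CollectI conjI)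
  qed
  thus "X \<in> (\<lambda>G j t. G t j) ` fsp {..<T} (fsp {..<N} UNIV False) (\<lambda>_. False)"
    by (rule image_eqI[where x="\<lambda>t j. X j t", rotated]) simp
qed

lemma designs_sub2: "(\<lambda>G j t. G t j) ` fsp {..<T} (fsp {..<N} UNIV False) (\<lambda>_. False) \<subseteq> designs N T"
proof
  fix X assume "X \<in> (\<lambda>G j t. G t j) ` fsp {..<T} (fsp {..<N} UNIV False) (\<lambda>_. False)"
  then obtain G where G: "G \<in> fsp {..<T} (fsp {..<N} UNIV False) (\<lambda>_. False)" and X: "X = (\<lambda>j t. G t j)" by (rule imageE)
  have "G t j \<Longrightarrow> j < N \<and> t < T" for j t
  proof -
    assume g: "G t j"
    have "t < T"
    proof (rule ccontr)
      assume "\<not> t < T"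
      hence "G t = (\<lambda>_. False)" using G unfolding fsp_def by simp
      thus False using g by simp
    qed
    hence "G t \<in> fsp {..<N} UNIV False" using G unfolding fsp_def by blast
    hence "j < N" using g unfolding fsp_def by (cases "j < N") auto
    thus ?thesis using \<open>t < T\<close> by simp
  qed
  thus "X \<in> designs N T" unfolding X designs_def by simp
qed

lemma designs_img: "designs N T = (\<lambda>G j t. G t j) ` fsp {..<T} (fsp {..<N} UNIV False) (\<lambda>_. False)"
  using designs_sub1 designs_sub2 by blast

lemma designs_fsp:
  "(\<Sum>X\<in>designs N T. F X) = (\<Sum>G\<in>fsp {..<T} (fsp {..<N} UNIV False) (\<lambda>_. False). F (\<lambda>j t. G t j))"
  unfolding designs_img sum.reindex[OF swap_inj] comp_def ..

lemma outcomes_fsp: "outcomes T = fsp {..<T} UNIV False"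
  by (auto simp: outcomes_def fsp_def)

lemma lik_col: "dilution_lik u T X S Y = (\<Prod>t<T. ell u S (\<lambda>j. X j t) (Y t))"
  by (simp add: dilution_lik_def ell_def)

lemma dp_col: "design_prob N K T (\<lambda>j t. G t j) = (\<Prod>t<T. colp N K (G t))"
  unfolding design_prob_def colp_def q_def by (rule prod.swap)

lemma bhat:
  "(\<Sum>X\<in>designs N T. design_prob N K T X *
       (\<Sum>Y\<in>outcomes T. sqrt (dilution_lik u T X S Y * dilution_lik u T X S' Y)))
   = rho N K u S S' ^ T"
proof -
  have inner: "(\<Sum>Y\<in>outcomes T. sqrt (dilution_lik u T X S Y * dilution_lik u T X S' Y))
      = (\<Prod>t<T. bet u S S' (\<lambda>j. X j t))" for X
  proof -
    have "(\<Sum>Y\<in>outcomes T. sqrt (dilution_lik u T X S Y * dilution_lik u T X S' Y))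
       = (\<Sum>Y\<in>fsp {..<T} UNIV False. \<Prod>t<T. sqrt (ell u S (\<lambda>j. X j t) (Y t) * ell u S' (\<lambda>j. X j t) (Y t)))"
      unfolding outcomes_fsp lik_col
      by (simp only: prod.distrib[symmetric] sqrt_prod[OF finite_lessThan])
    also have "\<dots> = (\<Prod>t<T. bet u S S' (\<lambda>j. X j t))"
      unfolding bet_def
      using fsp_finite_sum[of "{..<T}" "UNIV :: bool set" False
          "\<lambda>t y. sqrt (ell u S (\<lambda>j. X j t) y * ell u S' (\<lambda>j. X j t) y)"] by simp
    finally show ?thesis .
  qed
  have "(\<Sum>X\<in>designs N T. design_prob N K T X *
       (\<Sum>Y\<in>outcomes T. sqrt (dilution_lik u T X S Y * dilution_lik u T X S' Y)))
     = (\<Sum>G\<in>fsp {..<T} (fsp {..<N} UNIV False) (\<lambda>_. False). \<Prod>t<T. colp N K (G t) * bet u S S' (G t))"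
    unfolding designs_fsp inner dp_col by (simp add: prod.distrib)
  also have "\<dots> = (\<Prod>t<T. rho N K u S S')"
    unfolding rho_def
    using fsp_finite_sum[of "{..<T}" "fsp {..<N} UNIV False" "\<lambda>_. False"
          "\<lambda>t x. colp N K x * bet u S S' x"]
          fsp_finite_sum[of "{..<N}" "UNIV :: bool set" False "\<lambda>_ _. 0"]
    by (simp add: fsp_def[of _ UNIV])
  finally show ?thesis by simp
qed



lemma q_nonneg: "q K v \<ge> 0"
  by (cases "K = 0") (auto simp: q_def)

lemma colp_nonneg: "colp N K x \<ge> 0"
  unfolding colp_def by (rule prod_nonneg) (simp add: q_nonneg)

lemma colp_sum: "(\<Sum>x\<in>fsp {..<N} UNIV False. colp N K x) = 1"
  unfolding colp_def
  using fsp_finite_sum[of "{..<N::nat}" "UNIV :: bool set" False "\<lambda>_ v. q K v"]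
  by (simp add: q_def UNIV_bool)

lemma fsp_fin: "finite (fsp {..<N::nat} (UNIV::bool set) False)"
proof -
  have "finite {..<N::nat}" "finite (UNIV::bool set)" "False \<in> (UNIV::bool set)" by simp_all
  thus ?thesis using fsp_finite_sum[of "{..<N::nat}" "UNIV :: bool set" False "\<lambda>_ _. 0::real"] by blast
qed

lemma ell_pos: "0 \<le> u \<Longrightarrow> u \<le> 1 \<Longrightarrow> 0 \<le> ell u S x y \<and> ell u S x y \<le> 1"
  unfolding ell_def Let_def
  by (auto simp: power_le_one)

lemma bet_le1:
  assumes "0 \<le> u" "u \<le> 1"
  shows "bet u S S' x \<le> 1"
proof -
  let ?a = "u ^ card {j \<in> S. x j}" and ?b = "u ^ card {j \<in> S'. x j}"
  have a: "0 \<le> ?a" "?a \<le> 1" and b: "0 \<le> ?b" "?b \<le> 1" using assms by (auto simp: power_le_one)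
  have "bet u S S' x = sqrt ((1 - ?a) * (1 - ?b)) + sqrt (?a * ?b)"
    unfolding bet_def ell_def Let_def by (simp add: UNIV_bool)
  also have "\<dots> \<le> ((1 - ?a) + (1 - ?b))/2 + (?a + ?b)/2"
    using arith_geo_mean_sqrt[of "1 - ?a" "1 - ?b"] arith_geo_mean_sqrt[of ?a ?b] a b
    by (intro add_mono) auto
  finally show ?thesis by (simp add: field_simps)
qed

definition EE :: "nat set \<Rightarrow> nat \<Rightarrow> (nat \<Rightarrow> bool) \<Rightarrow> bool" where
  "EE U j x = (x j \<and> (\<forall>i\<in>U - {j}. \<not> x i))"

lemma bet_E:
  assumes "j \<in> S - S'" "EE (S \<union> S') j x"
  shows "bet u S S' x = sqrt u"
proof -
  have "{i \<in> S. x i} = {j}" using assms unfolding EE_def by auto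
  hence c1: "card {i \<in> S. x i} = 1" by simp
  have "{i \<in> S'. x i} = {}" using assms unfolding EE_def by auto
  hence c2: "card {i \<in> S'. x i} = 0" by (simp only: card.empty)
  show ?thesis unfolding bet_def ell_def Let_def c1 c2 by (simp add: UNIV_bool)
qed

lemma bet_point:
  assumes "0 \<le> u" "u \<le> 1"
  shows "bet u S S' x \<le> 1 - (1 - sqrt u) * (\<Sum>j\<in>S - S'. of_bool (EE (S \<union> S') j x))"
proof (cases "\<exists>j\<in>S - S'. EE (S \<union> S') j x")
  case False
  hence "(\<Sum>j\<in>S - S'. of_bool (EE (S \<union> S') j x) :: real) = 0"
    by (intro sum.neutral) auto
  thus ?thesis using bet_le1[OF assms] by simp
next
  case True
  then obtain j where j: "j \<in> S - S'" "EE (S \<union> S') j x" by blast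
  have "(\<Sum>k\<in>S - S'. of_bool (EE (S \<union> S') k x) :: real) \<le> 1"
  proof (cases "finite (S - S')")
    case True
    have "(\<Sum>k\<in>S - S'. of_bool (EE (S \<union> S') k x) :: real) = (\<Sum>k\<in>S - S'. if k = j then 1 else 0)"
    proof (rule sum.cong[OF refl])
      fix k assume k: "k \<in> S - S'"
      show "(of_bool (EE (S \<union> S') k x) :: real) = (if k = j then 1 else 0)"
      proof (cases "k = j")
        case True thus ?thesis using j by simp
      next
        case False
        have "\<not> EE (S \<union> S') k x" using j k False unfolding EE_def by auto
        thus ?thesis using False by simp
      qed
    qed
    also have "\<dots> = 1" using True j(1) by simp
    finally show ?thesis by simp
  qed simp
  moreover have "0 \<le> 1 - sqrt u" using assms by simp
  ultimately have "(1 - sqrt u) * (\<Sum>k\<in>S - S'. of_bool (EE (S \<union> S') k x)) \<le> (1 - sqrt u) * 1"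
    by (intro mult_left_mono)
  hence "(1 - sqrt u) * (\<Sum>k\<in>S - S'. of_bool (EE (S \<union> S') k x)) \<le> (1 - sqrt u)" by simp
  hence "1 - (1 - sqrt u) \<le> 1 - (1 - sqrt u) * (\<Sum>k\<in>S - S'. of_bool (EE (S \<union> S') k x))"
    by linarith
  thus ?thesis using bet_E[OF j] by simp
qed



lemma EE_prod:
  assumes "j \<in> U" "U \<subseteq> {..<N}"
  shows "(of_bool (EE U j x) :: real) =
    (\<Prod>i<N. if i = j then of_bool (x i) else if i \<in> U then of_bool (\<not> x i) else 1)"
proof (cases "EE U j x")
  case True
  have "(\<Prod>i<N. if i = j then of_bool (x i) else if i \<in> U then of_bool (\<not> x i) else 1) = (\<Prod>i<N. (1::real))"
    by (rule prod.cong[OF refl]) (use True in \<open>auto simp: EE_def\<close>)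
  thus ?thesis using True by simp
next
  case False
  then obtain i where i: "i < N" "(if i = j then of_bool (x i) else if i \<in> U then of_bool (\<not> x i) else 1) = (0::real)"
    using assms unfolding EE_def
    by (metis (full_types) Diff_iff insertI1 lessThan_iff of_bool_eq(1) singletonD subsetD)
  have "(\<Prod>i<N. if i = j then of_bool (x i) else if i \<in> U then of_bool (\<not> x i) else (1::real)) = 0"
    by (rule prod_zero[OF finite_lessThan], rule bexI[where x=i]) (use i in simp_all)
  thus ?thesis using False by simp
qed

lemma PE:
  assumes "j \<in> U" "U \<subseteq> {..<N}"
  shows "(\<Sum>x\<in>fsp {..<N} UNIV False. colp N K x * of_bool (EE U j x))
       = (1 / real K) * (1 - 1 / real K) ^ card (U - {j})"
proof -
  define r where "r i v = q K v * (if i = j then of_bool v else if i \<in> U then of_bool (\<not> v) else (1::real))" for i v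
  have "(\<Sum>x\<in>fsp {..<N} UNIV False. colp N K x * of_bool (EE U j x))
      = (\<Sum>x\<in>fsp {..<N} UNIV False. \<Prod>i<N. r i (x i))"
    by (rule sum.cong[OF refl]) (simp add: EE_prod[OF assms] colp_def r_def prod.distrib)
  also have "\<dots> = (\<Prod>i<N. \<Sum>v\<in>UNIV. r i v)"
    using fsp_finite_sum[of "{..<N::nat}" "UNIV :: bool set" False r] by simp
  also have "\<dots> = (\<Prod>i<N. if i = j then 1 / real K else if i \<in> U then 1 - 1 / real K else 1)"
    by (rule prod.cong[OF refl]) (auto simp: r_def q_def UNIV_bool)
  also have "\<dots> = (1 / real K) * (\<Prod>i\<in>{..<N} - {j}. if i \<in> U then 1 - 1 / real K else 1)"
    using assms by (subst prod.delta_remove) auto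
  also have "(\<Prod>i\<in>{..<N} - {j}. if i \<in> U then 1 - 1 / real K else 1) = (\<Prod>i\<in>({..<N} - {j}) \<inter> U. 1 - 1 / real K)"
    by (rule prod.inter_restrict[symmetric]) simp
  also have "({..<N} - {j}) \<inter> U = U - {j}" using assms by auto
  finally show ?thesis by simp
qed

lemma pow_bound:
  assumes "K \<ge> 2"
  shows "(1 - 1 / real K) ^ (2 * K) \<ge> exp (-4)"
proof -
  let ?x = "1 / real K"
  have x: "0 \<le> ?x" "?x \<le> 1/2" using assms by auto
  have pos: "0 < 1 - ?x" using x by simp
  have "ln (1 - ?x) \<ge> - ?x - 2 * ?x^2" by (rule ln_one_minus_pos_lower_bound[OF x])
  hence "real (2 * K) * ln (1 - ?x) \<ge> real (2 * K) * (- ?x - 2 * ?x^2)"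
    by (intro mult_left_mono) auto
  moreover have "real (2 * K) * (- ?x - 2 * ?x^2) = -2 - 4 / real K"
    using assms by (simp add: field_simps power2_eq_square)
  moreover have "-2 - 4 / real K \<ge> -4" using assms by (simp add: field_simps)
  ultimately have "real (2 * K) * ln (1 - ?x) \<ge> -4" by linarith
  hence "exp (-4) \<le> exp (real (2 * K) * ln (1 - ?x))" by simp
  also have "\<dots> = (1 - ?x) ^ (2 * K)"
    by (simp only: exp_of_nat_mult exp_ln[OF pos])
  finally show ?thesis .
qed

lemma PE_lower:
  assumes "K \<ge> 2" "j \<in> S" "S \<subseteq> {..<N}" "S' \<subseteq> {..<N}" "card S = K" "card S' = K"
  shows "(\<Sum>x\<in>fsp {..<N} UNIV False. colp N K x * of_bool (EE (S \<union> S') j x)) \<ge> exp (-4) / real K"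
proof -
  have fin: "finite S" "finite S'" using assms finite_subset by blast+
  have c: "card (S \<union> S' - {j}) \<le> 2 * K"
    using card_Un_le[of S S'] card_mono[of "S \<union> S'" "S \<union> S' - {j}"] fin assms by auto
  have b: "0 \<le> 1 - 1 / real K" "1 - 1 / real K \<le> 1" using assms by auto
  have "exp (-4) \<le> (1 - 1 / real K) ^ (2 * K)" by (rule pow_bound[OF assms(1)])
  also have "\<dots> \<le> (1 - 1 / real K) ^ card (S \<union> S' - {j})" by (rule power_decreasing[OF c b])
  finally have "exp (-4) / real K \<le> (1 / real K) * (1 - 1 / real K) ^ card (S \<union> S' - {j})"
    using assms by (simp add: divide_right_mono)
  also have "\<dots> = (\<Sum>x\<in>fsp {..<N} UNIV False. colp N K x * of_bool (EE (S \<union> S') j x))"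
    by (rule PE[symmetric]) (use assms in auto)
  finally show ?thesis .
qed



lemma bet_nonneg: "0 \<le> u \<Longrightarrow> u \<le> 1 \<Longrightarrow> bet u S S' x \<ge> 0"
  unfolding bet_def by (intro sum_nonneg real_sqrt_ge_zero mult_nonneg_nonneg) (simp_all add: ell_pos)

lemma rho_nonneg: "0 \<le> u \<Longrightarrow> u \<le> 1 \<Longrightarrow> rho N K u S S' \<ge> 0"
  unfolding rho_def by (intro sum_nonneg mult_nonneg_nonneg colp_nonneg bet_nonneg)

lemma rho_le:
  assumes K: "K \<ge> 2" and u: "0 \<le> u" "u \<le> 1"
    and S: "S \<subseteq> {..<N}" "S' \<subseteq> {..<N}" "card S = K" "card S' = K"
  shows "rho N K u S S' \<le> exp (- ((1 - sqrt u) * exp (-4) / real K)) ^ card (S - S')"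
proof -
  let ?M = "fsp {..<N::nat} (UNIV::bool set) False"
  let ?D = "S - S'"
  let ?I = "\<lambda>j x. of_bool (EE (S \<union> S') j x) :: real"
  have finD: "finite ?D" using S finite_subset by blast
  have su: "0 \<le> 1 - sqrt u" using u by simp
  have "rho N K u S S' \<le> (\<Sum>x\<in>?M. colp N K x * (1 - (1 - sqrt u) * (\<Sum>j\<in>?D. ?I j x)))"
    unfolding rho_def
    by (intro sum_mono mult_left_mono bet_point u colp_nonneg)
  also have "\<dots> = (\<Sum>x\<in>?M. colp N K x) - (1 - sqrt u) * (\<Sum>j\<in>?D. \<Sum>x\<in>?M. colp N K x * ?I j x)"
  proof -
    have "(\<Sum>x\<in>?M. colp N K x * (1 - (1 - sqrt u) * (\<Sum>j\<in>?D. ?I j x)))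
        = (\<Sum>x\<in>?M. colp N K x - (1 - sqrt u) * (\<Sum>j\<in>?D. colp N K x * ?I j x))"
      by (rule sum.cong[OF refl]) (simp add: right_diff_distrib sum_distrib_left mult.left_commute)
    also have "\<dots> = (\<Sum>x\<in>?M. colp N K x) - (1 - sqrt u) * (\<Sum>x\<in>?M. \<Sum>j\<in>?D. colp N K x * ?I j x)"
      by (simp only: sum_subtractf sum_distrib_left)
    also have "(\<Sum>x\<in>?M. \<Sum>j\<in>?D. colp N K x * ?I j x) = (\<Sum>j\<in>?D. \<Sum>x\<in>?M. colp N K x * ?I j x)"
      by (rule sum.swap)
    finally show ?thesis .
  qed
  also have "\<dots> = 1 - (1 - sqrt u) * (\<Sum>j\<in>?D. \<Sum>x\<in>?M. colp N K x * ?I j x)"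
    by (simp add: colp_sum)
  also have "\<dots> \<le> 1 - (1 - sqrt u) * (\<Sum>j\<in>?D. exp (-4) / real K)"
  proof -
    have "(\<Sum>j\<in>?D. exp (-4) / real K) \<le> (\<Sum>j\<in>?D. \<Sum>x\<in>?M. colp N K x * ?I j x)"
      by (rule sum_mono, rule PE_lower) (use K S in auto)
    from mult_left_mono[OF this su] show ?thesis by linarith
  qed
  also have "\<dots> = 1 + (- ((1 - sqrt u) * exp (-4) / real K) * real (card ?D))"
    by simp
  also have "\<dots> \<le> exp (- ((1 - sqrt u) * exp (-4) / real K) * real (card ?D))"
    by (rule exp_ge_add_one_self)
  also have "\<dots> = exp (- ((1 - sqrt u) * exp (-4) / real K)) ^ card ?D"
    by (subst mult.commute) (rule exp_of_nat_mult)
  finally show ?thesis .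
qed



lemma lik_nonneg: "0 \<le> u \<Longrightarrow> u \<le> 1 \<Longrightarrow> dilution_lik u T X S Y \<ge> 0"
  unfolding lik_col by (intro prod_nonneg) (simp add: ell_pos)

lemma dp_nonneg: "design_prob N K T X \<ge> 0"
proof -
  have "design_prob N K T X = (\<Prod>j<N. \<Prod>t<T. q K (X j t))" unfolding design_prob_def q_def ..
  thus ?thesis by (simp add: prod_nonneg q_nonneg)
qed

lemma finite_designs: "finite (designs N T)"
proof -
  have "finite (fsp {..<N::nat} (UNIV::bool set) False)" by (rule fsp_fin)
  moreover have "(\<lambda>_. False) \<in> fsp {..<N::nat} (UNIV::bool set) False" by (simp add: fsp_def)
  ultimately have "finite (fsp {..<T::nat} (fsp {..<N::nat} (UNIV::bool set) False) (\<lambda>_. False))"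
    using fsp_finite_sum[of "{..<T::nat}" "fsp {..<N::nat} (UNIV::bool set) False" "\<lambda>_. False" "\<lambda>_ _. 0::real"]
    by blast
  thus ?thesis unfolding designs_img by simp
qed

lemma finite_outcomes: "finite (outcomes T)"
  unfolding outcomes_fsp by (rule fsp_fin)

lemma finite_D: "finite (defective_sets N K)"
proof -
  have "defective_sets N K \<subseteq> Pow {..<N}" unfolding defective_sets_def by auto
  thus ?thesis by (rule finite_subset) simp
qed

lemma pointwise:
  assumes "S \<in> defective_sets N K" "0 \<le> u" "u \<le> 1"
  shows "(if ml_error N K T u X S Y then design_prob N K T X * dilution_lik u T X S Y else 0)
    \<le> design_prob N K T X * (\<Sum>S'\<in>defective_sets N K - {S}. sqrt (dilution_lik u T X S Y * dilution_lik u T X S' Y))"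
proof (cases "ml_error N K T u X S Y")
  case False
  thus ?thesis using dp_nonneg lik_nonneg assms
    by (simp add: sum_nonneg mult_nonneg_nonneg)
next
  case True
  then obtain S' where S': "S' \<in> defective_sets N K" "S' \<noteq> S"
    "dilution_lik u T X S' Y \<ge> dilution_lik u T X S Y" unfolding ml_error_def by blast
  let ?l = "dilution_lik u T X S Y"
  have l0: "?l \<ge> 0" by (rule lik_nonneg) (use assms in auto)
  have "?l = sqrt (?l * ?l)" using l0 by simp
  also have "\<dots> \<le> sqrt (?l * dilution_lik u T X S' Y)"
    using S'(3) l0 by (intro real_sqrt_le_mono mult_left_mono)
  also have "\<dots> \<le> (\<Sum>S'\<in>defective_sets N K - {S}. sqrt (?l * dilution_lik u T X S' Y))"
    by (rule member_le_sum) (use S' finite_D l0 lik_nonneg assms in auto)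
  finally show ?thesis using True dp_nonneg by (simp add: mult_left_mono)
qed

lemma err_S:
  assumes "S \<in> defective_sets N K" "0 \<le> u" "u \<le> 1"
  shows "(\<Sum>X\<in>designs N T. \<Sum>Y\<in>outcomes T.
        (if ml_error N K T u X S Y then design_prob N K T X * dilution_lik u T X S Y else 0))
     \<le> (\<Sum>S'\<in>defective_sets N K - {S}. rho N K u S S' ^ T)"
proof -
  let ?D = "defective_sets N K - {S}"
  let ?s = "\<lambda>X Y S'. sqrt (dilution_lik u T X S Y * dilution_lik u T X S' Y)"
  have "(\<Sum>X\<in>designs N T. \<Sum>Y\<in>outcomes T.
        (if ml_error N K T u X S Y then design_prob N K T X * dilution_lik u T X S Y else 0))
      \<le> (\<Sum>X\<in>designs N T. \<Sum>Y\<in>outcomes T. design_prob N K T X * (\<Sum>S'\<in>?D. ?s X Y S'))"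
    by (intro sum_mono pointwise assms)
  also have "\<dots> = (\<Sum>X\<in>designs N T. \<Sum>S'\<in>?D. design_prob N K T X * (\<Sum>Y\<in>outcomes T. ?s X Y S'))"
    by (simp add: sum_distrib_left sum.swap[of _ "outcomes T"])
  also have "\<dots> = (\<Sum>S'\<in>?D. \<Sum>X\<in>designs N T. design_prob N K T X * (\<Sum>Y\<in>outcomes T. ?s X Y S'))"
    by (rule sum.swap)
  also have "\<dots> = (\<Sum>S'\<in>?D. rho N K u S S' ^ T)"
    by (simp only: bhat)
  finally show ?thesis .
qed

lemma count_card:
  assumes S: "S \<in> defective_sets N K" and d: "d \<ge> 1"
  shows "card {S' \<in> defective_sets N K - {S}. card (S - S') = d} \<le> N ^ (2 * d)"
proof -
  let ?P = "{A. A \<subseteq> {..<N} \<and> card A = d}"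
  let ?A = "{S' \<in> defective_sets N K - {S}. card (S - S') = d}"
  have finS: "finite S" using S unfolding defective_sets_def using finite_subset by blast
  have inj: "inj_on (\<lambda>S'. (S - S', S' - S)) ?A"
  proof (rule inj_onI)
    fix A B assume "A \<in> ?A" "B \<in> ?A" "(S - A, A - S) = (S - B, B - S)"
    hence "S - A = S - B" "A - S = B - S" by auto
    have "A = (S - (S - A)) \<union> (A - S)" by blast
    also have "\<dots> = (S - (S - B)) \<union> (B - S)" using \<open>S - A = S - B\<close> \<open>A - S = B - S\<close> by simp
    also have "\<dots> = B" by blast
    finally show "A = B" .
  qed
  have img: "(\<lambda>S'. (S - S', S' - S)) ` ?A \<subseteq> ?P \<times> ?P"
  proof (rule image_subsetI)
    fix S' assume "S' \<in> ?A"
    hence h: "S' \<in> defective_sets N K" "S' \<noteq> S" "d = card (S - S')" by auto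
    have finS': "finite S'" using h(1) unfolding defective_sets_def using finite_subset by blast
    have "card (S - S') = card S - card (S \<inter> S')" using finS by (simp add: card_Diff_subset_Int)
    moreover have "card (S' - S) = card S' - card (S' \<inter> S)" using finS' by (simp add: card_Diff_subset_Int)
    moreover have "card S = card S'" using S h(1) unfolding defective_sets_def by simp
    ultimately have "card (S' - S) = d" using h(3) by (simp add: Int_commute)
    thus "(S - S', S' - S) \<in> ?P \<times> ?P"
      using S h unfolding defective_sets_def by auto
  qed
  have "card ?A \<le> card (?P \<times> ?P)"
    by (rule card_inj_on_le[OF inj img]) simp
  also have "\<dots> = (N choose d) * (N choose d)"
    by (simp add: card_cartesian_product n_subsets)
  also have "\<dots> \<le> N ^ d * N ^ d"
  proof (cases "d \<le> N")
    case True thus ?thesis using binomial_le_pow[OF True] by (simp add: mult_le_mono)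
  next
    case False thus ?thesis by (simp add: binomial_eq_0)
  qed
  also have "\<dots> = N ^ (2 * d)" by (simp add: power_add[symmetric] mult_2)
  finally show ?thesis .
qed

lemma count_sum:
  assumes S: "S \<in> defective_sets N K" and z: "0 \<le> z"
  shows "(\<Sum>S'\<in>defective_sets N K - {S}. z ^ card (S - S')) \<le> (\<Sum>d\<in>{1..K}. real N ^ (2 * d) * z ^ d)"
proof -
  let ?D = "defective_sets N K - {S}"
  have finS: "finite S" and cS: "card S = K" using S unfolding defective_sets_def using finite_subset by auto
  have img: "(\<lambda>S'. card (S - S')) ` ?D \<subseteq> {1..K}"
  proof (rule image_subsetI)
    fix S' assume "S' \<in> ?D"
    hence h: "S' \<in> defective_sets N K" "S' \<noteq> S" by auto
    have finS': "finite S'" and cS': "card S' = K" using h(1) unfolding defective_sets_def using finite_subset by auto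
    have "S - S' \<noteq> {}"
    proof
      assume "S - S' = {}"
      hence "S \<subseteq> S'" by blast
      hence "S = S'" using card_subset_eq[OF finS'] cS cS' by simp
      thus False using h(2) by simp
    qed
    hence "card (S - S') \<ge> 1" using finS by (simp add: Suc_le_eq card_gt_0_iff)
    moreover have "card (S - S') \<le> K" using cS finS by (metis Diff_subset card_mono)
    ultimately show "card (S - S') \<in> {1..K}" by simp
  qed
  have "(\<Sum>S'\<in>?D. z ^ card (S - S')) = (\<Sum>d\<in>{1..K}. \<Sum>S'\<in>{S'\<in>?D. card (S - S') = d}. z ^ card (S - S'))"
    by (rule sum.group[symmetric]) (use finite_D img in auto)
  also have "\<dots> = (\<Sum>d\<in>{1..K}. real (card {S'\<in>?D. card (S - S') = d}) * z ^ d)"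
    by (rule sum.cong[OF refl]) simp
  also have "\<dots> \<le> (\<Sum>d\<in>{1..K}. real N ^ (2 * d) * z ^ d)"
  proof (rule sum_mono)
    fix d assume "d \<in> {1..K}"
    hence "card {S'\<in>?D. card (S - S') = d} \<le> N ^ (2 * d)" using count_card[OF S] by simp
    hence "real (card {S'\<in>?D. card (S - S') = d}) \<le> real N ^ (2 * d)" by (metis of_nat_le_iff of_nat_power)
    thus "real (card {S'\<in>?D. card (S - S') = d}) * z ^ d \<le> real N ^ (2 * d) * z ^ d"
      using z by (simp add: mult_right_mono)
  qed
  finally show ?thesis .
qed



lemma avg_nonneg:
  assumes "0 \<le> u" "u \<le> 1"
  shows "avg_error N K T u \<ge> 0"
  unfolding avg_error_def
  by (intro divide_nonneg_nonneg sum_nonneg) (auto intro: mult_nonneg_nonneg dp_nonneg lik_nonneg assms)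

lemma avg_bound:
  assumes K: "K \<ge> 2" "K \<le> N" and u: "0 \<le> u" "u \<le> 1"
    and wT: "exp (- ((1 - sqrt u) * exp (-4) / real K)) ^ T \<le> 1 / real N ^ 4"
  shows "avg_error N K T u \<le> 1 / real N"
proof -
  let ?w = "exp (- ((1 - sqrt u) * exp (-4) / real K))"
  let ?D = "defective_sets N K"
  have N1: "real N \<ge> 1" using K by simp
  have wpos: "0 \<le> ?w ^ T" by simp
  have perS: "(\<Sum>X\<in>designs N T. \<Sum>Y\<in>outcomes T.
        (if ml_error N K T u X S Y then design_prob N K T X * dilution_lik u T X S Y else 0)) \<le> 1 / real N"
    if S: "S \<in> ?D" for S
  proof -
    have "(\<Sum>X\<in>designs N T. \<Sum>Y\<in>outcomes T.
        (if ml_error N K T u X S Y then design_prob N K T X * dilution_lik u T X S Y else 0))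
        \<le> (\<Sum>S'\<in>?D - {S}. rho N K u S S' ^ T)" by (rule err_S[OF S u])
    also have "\<dots> \<le> (\<Sum>S'\<in>?D - {S}. (?w ^ T) ^ card (S - S'))"
    proof (rule sum_mono)
      fix S' assume "S' \<in> ?D - {S}"
      hence S': "S' \<subseteq> {..<N}" "card S' = K" unfolding defective_sets_def by auto
      have "rho N K u S S' \<le> ?w ^ card (S - S')"
        by (rule rho_le) (use K u S S' in \<open>auto simp: defective_sets_def\<close>)
      hence "rho N K u S S' ^ T \<le> (?w ^ card (S - S')) ^ T"
        by (intro power_mono rho_nonneg u)
      thus "rho N K u S S' ^ T \<le> (?w ^ T) ^ card (S - S')"
        by (simp add: power_mult[symmetric] mult.commute)
    qed
    also have "\<dots> \<le> (\<Sum>d\<in>{1..K}. real N ^ (2 * d) * (?w ^ T) ^ d)"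
      by (rule count_sum[OF S wpos])
    also have "\<dots> \<le> (\<Sum>d\<in>{1..K}. 1 / real N ^ 2)"
    proof (rule sum_mono)
      fix d assume d: "d \<in> {1..K}"
      have "real N ^ (2 * d) * (?w ^ T) ^ d \<le> real N ^ (2 * d) * (1 / real N ^ 4) ^ d"
        by (intro mult_left_mono power_mono wT wpos) simp
      also have "\<dots> = (1 / real N ^ 2) ^ d"
      proof -
        have e1: "(1 / real N ^ 4) ^ d = 1 / real N ^ (4 * d)"
          by (simp add: power_divide power_mult)
        have e2: "(1 / real N ^ 2) ^ d = 1 / real N ^ (2 * d)"
          by (simp add: power_divide power_mult)
        have e3: "real N ^ (4 * d) = real N ^ (2 * d) * real N ^ (2 * d)"
          by (simp flip: power_add)
        have np: "real N ^ (2 * d) > 0" using N1 by simp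
        show ?thesis unfolding e1 e2 e3 using np by (simp add: field_simps)
      qed
      also have "\<dots> \<le> (1 / real N ^ 2) ^ 1"
        by (rule power_decreasing) (use d N1 in auto)
      finally show "real N ^ (2 * d) * (?w ^ T) ^ d \<le> 1 / real N ^ 2" by simp
    qed
    also have "\<dots> = real K / real N ^ 2" by simp
    also have "\<dots> \<le> real N / real N ^ 2"
      using K N1 by (intro divide_right_mono) auto
    also have "\<dots> = 1 / real N" using N1 by (simp add: power2_eq_square)
    finally show ?thesis .
  qed
  have cardD: "card ?D = N choose K"
    unfolding defective_sets_def using n_subsets[of "{..<N}" K] by simp
  have bpos: "real (N choose K) > 0" using K by simp
  have "avg_error N K T u \<le> (\<Sum>S\<in>?D. 1 / real N) / real (N choose K)"
    unfolding avg_error_def using bpos by (intro divide_right_mono sum_mono perS) auto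
  also have "\<dots> = 1 / real N" using cardD bpos by simp
  finally show ?thesis .
qed



lemma sqrt_gap: assumes "0 \<le> u" "u \<le> 1" shows "1 - sqrt u \<ge> (1 - u) / 2"
proof -
  have s: "0 \<le> sqrt u" "sqrt u \<le> 1" using assms by auto
  have "1 - u = (1 - sqrt u) * (1 + sqrt u)" using assms by (simp add: algebra_simps)
  also have "\<dots> \<le> (1 - sqrt u) * 2" using s by (intro mult_left_mono) auto
  finally show ?thesis by simp
qed

lemma lnN: assumes "N \<ge> 3" shows "ln (real N) \<ge> 1"
proof -
  have "exp 1 \<le> real N" using exp_le assms by linarith
  hence "ln (exp 1) \<le> ln (real N)" using assms by (subst ln_le_cancel_iff) auto
  thus ?thesis by simp
qed

lemma wT_bound:
  assumes K: "K \<ge> 2" and N: "N \<ge> 3" and u: "0 \<le> u" "u < 1"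
    and T: "T = nat \<lfloor>10 * exp 4 * real K * ln (real N) / (1 - u)^2\<rfloor>"
  shows "exp (- ((1 - sqrt u) * exp (-4) / real K)) ^ T \<le> 1 / real N ^ 4"
proof -
  define g where "g = (1 - sqrt u) * exp (-4) / real K"
  define v where "v = 10 * exp 4 * real K * ln (real N) / (1 - u)^2"
  have L: "ln (real N) \<ge> 1" by (rule lnN[OF N])
  have Kp: "real K \<ge> 2" using K by simp
  have up: "0 < 1 - u" "1 - u \<le> 1" using u by auto
  have v0: "v \<ge> 0" unfolding v_def using L Kp up by (intro divide_nonneg_nonneg mult_nonneg_nonneg) auto
  have fl: "\<lfloor>v\<rfloor> \<ge> 0" using v0 by simp
  have "real T = real_of_int \<lfloor>v\<rfloor>" unfolding T v_def[symmetric] using fl by simp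
  hence Tv: "real T \<ge> v - 1" using floor_correct[of v] by simp
  have g0: "g \<ge> 0" unfolding g_def using u by (intro divide_nonneg_nonneg mult_nonneg_nonneg) auto
  have g1: "g \<le> 1"
  proof -
    have "1 - sqrt u \<le> 1" using u by simp
    moreover have "exp (-4::real) \<le> 1" by simp
    ultimately have "(1 - sqrt u) * exp (-4) \<le> 1 * 1" using u by (intro mult_mono) auto
    thus ?thesis unfolding g_def using Kp by (simp add: divide_le_eq)
  qed
  have gv: "g * v = (1 - sqrt u) * 10 * ln (real N) / (1 - u)^2"
  proof -
    have p: "(1 - u)^2 > 0" using up by simp
    have e: "exp 4 > (0::real)" by simp
    show ?thesis unfolding g_def v_def using Kp p e by (simp add: field_simps exp_minus)
  qed
  have "(1 - sqrt u) * 10 * ln (real N) \<ge> (1 - u) / 2 * 10 * ln (real N)"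
    using sqrt_gap[of u] u L by (intro mult_right_mono) auto
  moreover have "(1 - u) / 2 * 10 * ln (real N) = (1 - u) * 5 * ln (real N)" by simp
  ultimately have h1: "(1 - u) * 5 * ln (real N) \<le> (1 - sqrt u) * 10 * ln (real N)" by linarith
  have a1: "g * v \<ge> (1 - u) * 5 * ln (real N) / (1 - u)^2"
    unfolding gv by (rule divide_right_mono[OF h1]) simp
  have a2: "(1 - u) * 5 * ln (real N) / (1 - u)^2 = 5 * ln (real N) / (1 - u)"
  proof -
    have nz: "1 - u \<noteq> 0" using up by simp
    have "(1 - u) * 5 * ln (real N) / (1 - u)^2 = ((1 - u) * (5 * ln (real N))) / ((1 - u) * (1 - u))"
      by (simp only: power2_eq_square mult.assoc)
    also have "\<dots> = 5 * ln (real N) / (1 - u)" by (rule mult_divide_mult_cancel_left[OF nz])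
    finally show ?thesis .
  qed
  have a3: "5 * ln (real N) / (1 - u) \<ge> 5 * ln (real N)"
    using up L by (simp add: le_divide_eq mult_left_le)
  from a1 a2 a3 have gv5: "g * v \<ge> 5 * ln (real N)" by linarith
  have "g * real T \<ge> g * (v - 1)" using Tv g0 by (intro mult_left_mono) auto
  hence gT: "g * real T \<ge> 4 * ln (real N)" using gv5 g1 L by (simp add: right_diff_distrib)
  have "exp (- g) ^ T = exp (- (g * real T))"
    by (simp add: exp_of_nat_mult[symmetric] mult.commute)
  also have "\<dots> \<le> exp (- (4 * ln (real N)))" using gT by simp
  also have "exp (4 * ln (real N)) = real N ^ 4"
    using N by (simp add: exp_of_nat_mult[where n=4, simplified])
  hence "exp (- (4 * ln (real N))) = 1 / real N ^ 4" by (simp add: exp_minus inverse_eq_divide)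
  finally show ?thesis unfolding g_def .
qed



theorem theorem9:
  "\<exists>C>0. \<forall>u::real. 0 \<le> u \<and> u < 1 \<longrightarrow>
     (\<forall>Ns Ks :: nat \<Rightarrow> nat.
        filterlim Ns at_top sequentially \<and> filterlim Ks at_top sequentially \<and>
        ((\<lambda>n. real (Ks n) / real (Ns n)) \<longlonglongrightarrow> 0) \<and> (\<forall>n. Ks n \<le> Ns n)
        \<longrightarrow> (\<exists>Ts :: nat \<Rightarrow> nat.
              (\<forall>n. real (Ts n) \<le> C * real (Ks n) * ln (real (Ns n)) / (1 - u)^2) \<and>
              ((\<lambda>n. avg_error (Ns n) (Ks n) (Ts n) u) \<longlonglongrightarrow> 0)))"
proof (intro exI[of _ "10 * exp 4"] conjI allI impI)
  show "(0::real) < 10 * exp 4" by simp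
  fix u :: real and Ns Ks :: "nat \<Rightarrow> nat"
  assume u: "0 \<le> u \<and> u < 1"
  assume h: "filterlim Ns at_top sequentially \<and> filterlim Ks at_top sequentially \<and>
        ((\<lambda>n. real (Ks n) / real (Ns n)) \<longlonglongrightarrow> 0) \<and> (\<forall>n. Ks n \<le> Ns n)"
  define Ts where "Ts n = nat \<lfloor>10 * exp 4 * real (Ks n) * ln (real (Ns n)) / (1 - u)^2\<rfloor>" for n
  show "\<exists>Ts :: nat \<Rightarrow> nat.
              (\<forall>n. real (Ts n) \<le> 10 * exp 4 * real (Ks n) * ln (real (Ns n)) / (1 - u)^2) \<and>
              ((\<lambda>n. avg_error (Ns n) (Ks n) (Ts n) u) \<longlonglongrightarrow> 0)"
  proof (intro exI[of _ Ts] conjI allI)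
    fix n
    let ?v = "10 * exp 4 * real (Ks n) * ln (real (Ns n)) / (1 - u)^2"
    have "ln (real (Ns n)) \<ge> 0" by (cases "Ns n = 0") auto
    hence v0: "?v \<ge> 0" using u by (intro divide_nonneg_nonneg mult_nonneg_nonneg) auto
    hence "\<lfloor>?v\<rfloor> \<ge> 0" by simp
    hence "real (Ts n) = real_of_int \<lfloor>?v\<rfloor>" unfolding Ts_def by simp
    thus "real (Ts n) \<le> ?v" by simp
  next
    have evK: "eventually (\<lambda>n. Ks n \<ge> 2) sequentially"
      using h unfolding filterlim_at_top by blast
    have evN: "eventually (\<lambda>n. Ns n \<ge> 3) sequentially"
      using h unfolding filterlim_at_top by blast
    have ev: "eventually (\<lambda>n. avg_error (Ns n) (Ks n) (Ts n) u \<le> 1 / real (Ns n)) sequentially"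
      using evK evN
    proof eventually_elim
      case (elim n)
      show ?case
      proof (rule avg_bound)
        show "2 \<le> Ks n" using elim by simp
        show "Ks n \<le> Ns n" using h by blast
        show "0 \<le> u" "u \<le> 1" using u by auto
        show "exp (- ((1 - sqrt u) * exp (- 4) / real (Ks n))) ^ Ts n \<le> 1 / real (Ns n) ^ 4"
          by (rule wT_bound) (use elim u in \<open>auto simp: Ts_def\<close>)
      qed
    qed
    have ev0: "eventually (\<lambda>n. 0 \<le> avg_error (Ns n) (Ks n) (Ts n) u) sequentially"
      using u by (intro always_eventually allI avg_nonneg) auto
    have "filterlim (\<lambda>n. real (Ns n)) at_top sequentially"
      using filterlim_compose[OF filterlim_real_sequentially] h by blast
    hence lim: "(\<lambda>n. 1 / real (Ns n)) \<longlonglongrightarrow> 0"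
      using tendsto_inverse_0_at_top by (simp add: inverse_eq_divide) blast
    show "(\<lambda>n. avg_error (Ns n) (Ks n) (Ts n) u) \<longlonglongrightarrow> 0"
      by (rule tendsto_sandwich[OF ev0 ev tendsto_const lim])
  qed
qed


end
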